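(* Let $(\rho,\sigma)\in\mathfrak V$ with $\sigma\le0$ and $P,Q\in W^{(l)}\setminus\{0\}$. If $[P,Q]_{\rho,\sigma}=0$, then $\mathrm{st}_{\rho,\sigma}(P)$ and $\mathrm{st}_{\rho,\sigma}(Q)$ are aligned, and $\mathrm{en}_{\rho,\sigma}(P)$ and $\mathrm{en}_{\rho,\sigma}(Q)$ are aligned.
   Context: $K$ is a field of characteristic zero, $l\in\mathbb{N}$. $W^{(l)}$ is the associative $K$-algebra with $K$-basis $\{X^{i/l}Y^j:i\in\mathbb{Z},j\in\mathbb{N}_0\}$, powers of $X$ multiplying as Laurent monomials and $[Y,X^\alpha]=\alpha X^{\alpha-1}$ for $\alpha\in\frac1l\mathbb{Z}$. $\Psi^{(l)}(X^{i/l}Y^j)=x^{i/l}y^j\in K[x^{\pm1/l},y]$; supports are sets of exponents with nonzero coefficient. $\mathfrak V=\{(\rho,\sigma)\in\mathbb{Z}^2:\gcd(\rho,\sigma)=1,\rho+\sigma>0\}$. For $P\ne0$: $v_{\rho,\sigma}(P)=\max\{\rho a+\sigma b:(a,b)\in\mathrm{Supp}(P)\}$; $\ell_{\rho,\sigma}(P)$ = sum of terms of $\Psi^{(l)}(P)$ attaining it; $\mathrm{st}_{\rho,\sigma}(P)$: among points $(a,b)\in\mathrm{Supp}(\ell_{\rho,\sigma}(P))$ maximizing $a-b$, the one with largest $a$; $\mathrm{en}_{\rho,\sigma}(P)$: among those maximizing $b-a$, the one with largest $b$. $[P,Q]_{\rho,\sigma}:=0$ if $[P,Q]=0$ or $v_{\rho,\sigma}([P,Q])<v_{\rho,\sigma}(P)+v_{\rho,\sigma}(Q)-(\rho+\sigma)$,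 else $\ell_{\rho,\sigma}([P,Q])$. Vectors $(a_1,a_2),(b_1,b_2)$ are aligned if $a_1b_2-a_2b_1=0$. *)

theory Defs
  imports Complex_Main
begin

text \<open>An element of W^(l) over a field K of characteristic zero is represented by its
coefficient function: P (i,j) is the coefficient of the basis element X^(i/l) Y^j.\<close>

type_synonym 'a wel = "int \<times> nat \<Rightarrow> 'a"

definition in_W :: "'a::zero wel \<Rightarrow> bool" where
  "in_W P \<longleftrightarrow> finite {ij. P ij \<noteq> 0}"

definition ffact_w :: "nat \<Rightarrow> 'a::field_char_0 \<Rightarrow> 'a" where
  "ffact_w m b = (\<Prod>k<m. b - of_nat k)"

text \<open>Multiplication in W^(l), normal ordered:
 (X^(i1/l) Y^j1)(X^(i2/l) Y^j2) = \<Sum>m\<le>j1 (j1 choose m) ffact_m(i2/l) X^((i1+i2-m l)/l) Y^(j1+j2-m),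
 which follows from [Y, X^a] = a X^(a-1).\<close>
definition W_mult :: "nat \<Rightarrow> 'a::field_char_0 wel \<Rightarrow> 'a wel \<Rightarrow> 'a wel" where
  "W_mult l P Q = (\<lambda>(i,j). \<Sum>((i1,j1),(i2,j2),m) \<in>
       {((i1,j1),(i2,j2),m). P (i1,j1) \<noteq> 0 \<and> Q (i2,j2) \<noteq> 0 \<and> m \<le> j1 \<and>
          i1 + i2 - int m * int l = i \<and> j1 + j2 = j + m}.
       P (i1,j1) * Q (i2,j2) * of_nat (j1 choose m) * ffact_w m (of_int i2 / of_nat l))"

definition W_comm :: "nat \<Rightarrow> 'a::field_char_0 wel \<Rightarrow> 'a wel \<Rightarrow> 'a wel" where
  "W_comm l P Q = (\<lambda>ij. W_mult l P Q ij - W_mult l Q P ij)"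

definition Supp :: "nat \<Rightarrow> 'a::zero wel \<Rightarrow> (rat \<times> rat) set" where
  "Supp l P = {(of_int i / of_nat l, of_nat j) | i j. P (i,j) \<noteq> 0}"

definition vval :: "nat \<Rightarrow> int \<Rightarrow> int \<Rightarrow> 'a::zero wel \<Rightarrow> rat" where
  "vval l \<rho> \<sigma> P = Max ((\<lambda>(a,b). of_int \<rho> * a + of_int \<sigma> * b) ` Supp l P)"

definition lead :: "nat \<Rightarrow> int \<Rightarrow> int \<Rightarrow> 'a::zero wel \<Rightarrow> 'a wel" where
  "lead l \<rho> \<sigma> P = (\<lambda>(i,j). if of_int \<rho> * (of_int i / of_nat l) + of_int \<sigma> * of_nat j
                               = vval l \<rho> \<sigma> P then P (i,j) else 0)"

definition st :: "nat \<Rightarrow> int \<Rightarrow> int \<Rightarrow> 'a::zero wel \<Rightarrow> rat \<times> rat" where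
  "st l \<rho> \<sigma> P = (let S = Supp l (lead l \<rho> \<sigma> P);
                     M = Max ((\<lambda>(a,b). a - b) ` S);
                     T = {(a,b) \<in> S. a - b = M}
                 in THE p. p \<in> T \<and> fst p = Max (fst ` T))"

definition en :: "nat \<Rightarrow> int \<Rightarrow> int \<Rightarrow> 'a::zero wel \<Rightarrow> rat \<times> rat" where
  "en l \<rho> \<sigma> P = (let S = Supp l (lead l \<rho> \<sigma> P);
                     M = Max ((\<lambda>(a,b). b - a) ` S);
                     T = {(a,b) \<in> S. b - a = M}
                 in THE p. p \<in> T \<and> snd p = Max (snd ` T))"

definition bracket_rs :: "nat \<Rightarrow> int \<Rightarrow> int \<Rightarrow> 'a::field_char_0 wel \<Rightarrow> 'a wel \<Rightarrow> 'a wel" where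
  "bracket_rs l \<rho> \<sigma> P Q = (let C = W_comm l P Q in
     if C = (\<lambda>_. 0) \<or> vval l \<rho> \<sigma> C < vval l \<rho> \<sigma> P + vval l \<rho> \<sigma> Q - of_int (\<rho> + \<sigma>)
     then (\<lambda>_. 0) else lead l \<rho> \<sigma> C)"

definition aligned :: "rat \<times> rat \<Rightarrow> rat \<times> rat \<Rightarrow> bool" where
  "aligned A B \<longleftrightarrow> fst A * snd B - snd A * fst B = 0"

definition frakV :: "(int \<times> int) set" where
  "frakV = {(\<rho>,\<sigma>). gcd \<rho> \<sigma> = 1 \<and> \<rho> + \<sigma> > 0}"

end

theory Submission
  imports Defs
begin

definition SS :: "nat \<Rightarrow> 'a::field_char_0 wel \<Rightarrow> 'a wel \<Rightarrow> int \<Rightarrow> nat \<Rightarrow> ((int\<times>nat)\<times>(int\<times>nat)\<times>nat) set" where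
  "SS l P Q i j = {((i1,j1),(i2,j2),m). P (i1,j1) \<noteq> 0 \<and> Q (i2,j2) \<noteq> 0 \<and> m \<le> j1 \<and>
          i1 + i2 - int m * int l = i \<and> j1 + j2 = j + m}"

definition FF :: "nat \<Rightarrow> 'a::field_char_0 wel \<Rightarrow> 'a wel \<Rightarrow> ((int\<times>nat)\<times>(int\<times>nat)\<times>nat) \<Rightarrow> 'a" where
  "FF l P Q = (\<lambda>((i1,j1),(i2,j2),m). P (i1,j1) * Q (i2,j2) * of_nat (j1 choose m) * ffact_w m (of_int i2 / of_nat l))"

lemma Wm_unfold: "W_mult l P Q (i,j) = (\<Sum>x\<in>SS l P Q i j. FF l P Q x)"
  unfolding W_mult_def SS_def FF_def by simp

lemma sum_S1:
  assumes u1: "\<And>a b c d. ((a,b),(c,d),1) \<in> SS l P Q i j \<Longrightarrow> (a,b) = (i1,j1) \<and> (c,d) = (i2,j2)"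
    and nz: "P (i1,j1) \<noteq> 0" "Q(i2,j2) \<noteq> 0" and ij: "i = i1+i2 - int l" "j + 1 = j1 + j2"
  shows "(\<Sum>x\<in>{x\<in>SS l P Q i j. snd (snd x) = 1}. FF l P Q x) = P(i1,j1)*Q(i2,j2)*(of_nat j1 * (of_int i2/of_nat l))"
proof (cases "j1 = 0")
  case True
  have "{x\<in>SS l P Q i j. snd (snd x) = 1} = {}"
  proof (rule ccontr)
    assume "{x\<in>SS l P Q i j. snd (snd x) = 1} \<noteq> {}"
    then obtain a b c d where x: "((a,b),(c,d),1) \<in> SS l P Q i j" by fastforce
    then have "b \<ge> 1" unfolding SS_def by auto
    with u1[OF x] True show False by simp
  qed
  then show ?thesis using True by (simp only: sum.empty) simp
next
  case False
  have "{x\<in>SS l P Q i j. snd (snd x) = 1} = {((i1,j1),(i2,j2),1::nat)}"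
  proof (rule set_eqI, rule iffI)
    fix x assume "x \<in> {x\<in>SS l P Q i j. snd (snd x) = 1}"
    then obtain a b c d where "x = ((a,b),(c,d),1)" "((a,b),(c,d),1) \<in> SS l P Q i j"
      by (cases x) auto
    then show "x \<in> {((i1,j1),(i2,j2),1::nat)}" using u1 by auto
  next
    fix x assume "x \<in> {((i1,j1),(i2,j2),1::nat)}"
    then show "x \<in> {x\<in>SS l P Q i j. snd (snd x) = 1}" using nz ij False unfolding SS_def by auto
  qed
  then show ?thesis by (simp add: FF_def ffact_w_def)
qed

lemma sum_S0:
  "(\<Sum>x\<in>{x\<in>SS l P Q i j. snd (snd x) = 0}. FF l P Q x) = (\<Sum>x\<in>{x\<in>SS l Q P i j. snd (snd x) = 0}. FF l Q P x)"
  apply (rule sum.reindex_bij_witness[where i="\<lambda>((a,b),(c,d),m). ((c,d),(a,b),m)" and j="\<lambda>((a,b),(c,d),m). ((c,d),(a,b),m)"])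
  by (auto simp: SS_def FF_def ffact_w_def)

lemma comm_coeff:
  fixes P Q :: "'a::field_char_0 wel"
  assumes fP: "finite {ij. P ij \<noteq> 0}" and fQ: "finite {ij. Q ij \<noteq> 0}"
    and mle: "\<And>a b c d m. ((a,b),(c,d),m) \<in> SS l P Q i j \<Longrightarrow> m \<le> 1"
    and mle': "\<And>a b c d m. ((a,b),(c,d),m) \<in> SS l Q P i j \<Longrightarrow> m \<le> 1"
    and u1: "\<And>a b c d. ((a,b),(c,d),1) \<in> SS l P Q i j \<Longrightarrow> (a,b) = (i1,j1) \<and> (c,d) = (i2,j2)"
    and u2: "\<And>a b c d. ((a,b),(c,d),1) \<in> SS l Q P i j \<Longrightarrow> (a,b) = (i2,j2) \<and> (c,d) = (i1,j1)"
    and nz: "P (i1,j1) \<noteq> 0" "Q(i2,j2) \<noteq> 0" and ij: "i = i1+i2 - int l" "j + 1 = j1 + j2"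
  shows "W_comm l P Q (i,j) = P(i1,j1)*Q(i2,j2)*(of_nat j1 * (of_int i2/of_nat l) - of_nat j2 * (of_int i1/of_nat l))"
proof -
  have split: "(\<Sum>x\<in>SS l A B i j. FF l A B x) = (\<Sum>x\<in>{x\<in>SS l A B i j. snd (snd x) = 0}. FF l A B x)
     + (\<Sum>x\<in>{x\<in>SS l A B i j. snd (snd x) = 1}. FF l A B x)"
    if fA: "finite {ij. A ij \<noteq> 0}" and fB: "finite {ij. B ij \<noteq> 0}"
      and ml: "\<And>a b c d m. ((a,b),(c,d),m) \<in> SS l A B i j \<Longrightarrow> m \<le> 1" for A B :: "'a wel"
  proof -
    have sub: "SS l A B i j \<subseteq> {ij. A ij \<noteq> 0} \<times> {ij. B ij \<noteq> 0} \<times> {0,1}"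
      using ml unfolding SS_def by fastforce
    have fin: "finite (SS l A B i j)"
      by (rule finite_subset[OF sub]) (use fA fB in auto)
    have eq: "SS l A B i j = {x\<in>SS l A B i j. snd (snd x) = 0} \<union> {x\<in>SS l A B i j. snd (snd x) = 1}"
      using ml by fastforce
    show ?thesis
      by (subst eq, rule sum.union_disjoint) (use fin in auto)
  qed
  have "W_comm l P Q (i,j) = P(i1,j1)*Q(i2,j2)*(of_nat j1 * (of_int i2/of_nat l)) - Q(i2,j2)*P(i1,j1)*(of_nat j2 * (of_int i1/of_nat l))"
    unfolding W_comm_def Wm_unfold
    using split[OF fP fQ mle] split[OF fQ fP mle'] sum_S0[of l P Q i j]
      sum_S1[of l P Q i j i1 j1 i2 j2, OF u1 nz ij] sum_S1[of l Q P i j i2 j2 i1 j1, OF u2 nz(2,1)] ij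
    by (simp add: add.commute)
  then show ?thesis by (simp add: algebra_simps)
qed

lemma line_ineq:
  fixes a a1 b b1 r s :: rat
  assumes r: "r > 0" and rs: "r + s > 0" and e: "r*a+s*b = r*a1+s*b1" and le: "b1 \<le> b"
  shows "a - b \<le> a1 - b1 \<and> (a - b = a1 - b1 \<longrightarrow> a = a1 \<and> b = b1)"
proof -
  have k: "r*((a-b)-(a1-b1)) = -((r+s)*(b-b1))" using e by (simp add: algebra_simps)
  have "(r+s)*(b-b1) \<ge> 0" using rs le by simp
  then have "r*((a-b)-(a1-b1)) \<le> 0" using k by simp
  then have 1: "a - b \<le> a1 - b1" using r by (simp add: mult_le_0_iff)
  have 2: "a = a1 \<and> b = b1" if "a - b = a1 - b1"
  proof -
    have "(r+s)*(b-b1) = 0" using k that by simp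
    then have "b = b1" using rs by simp
    then show ?thesis using that by simp
  qed
  show ?thesis using 1 2 by blast
qed

lemma line_ineq2:
  fixes a a1 b b1 r s :: rat
  assumes r: "r > 0" and rs: "r + s > 0" and e: "r*a+s*b = r*a1+s*b1" and le: "b \<le> b1"
  shows "b - a \<le> b1 - a1 \<and> (b - a = b1 - a1 \<longrightarrow> a = a1 \<and> b = b1)"
  using line_ineq[OF r rs e[symmetric] le] by auto

definition wt :: "nat \<Rightarrow> int \<Rightarrow> int \<Rightarrow> int \<times> nat \<Rightarrow> rat" where
  "wt l \<rho> \<sigma> ij = (case ij of (i,j) \<Rightarrow> of_int \<rho> * (of_int i / of_nat l) + of_int \<sigma> * of_nat j)"

lemma vval_eq: "vval l \<rho> \<sigma> P = Max (wt l \<rho> \<sigma> ` {ij. P ij \<noteq> 0})"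
proof -
  have "(\<lambda>(a,b). of_int \<rho> * a + of_int \<sigma> * b) ` Supp l P = wt l \<rho> \<sigma> ` {ij. P ij \<noteq> 0}"
    unfolding Supp_def wt_def by force
  then show ?thesis unfolding vval_def by simp
qed

lemma wt_le: "finite {ij. P ij \<noteq> 0} \<Longrightarrow> P ij \<noteq> 0 \<Longrightarrow> wt l \<rho> \<sigma> ij \<le> vval l \<rho> \<sigma> P"
  unfolding vval_eq by (rule Max_ge) auto

lemma wt_max: assumes "finite {ij. P ij \<noteq> 0}" "P \<noteq> (\<lambda>_. 0)"
  shows "\<exists>ij. P ij \<noteq> 0 \<and> wt l \<rho> \<sigma> ij = vval l \<rho> \<sigma> P"
proof -
  have "{ij. P ij \<noteq> 0} \<noteq> {}" using assms(2) by auto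
  then have "vval l \<rho> \<sigma> P \<in> wt l \<rho> \<sigma> ` {ij. P ij \<noteq> 0}" unfolding vval_eq
    using assms(1) by (intro Max_in) auto
  then show ?thesis by (metis (mono_tags, lifting) imageE mem_Collect_eq)
qed

lemma lead_nz: assumes "finite {ij. P ij \<noteq> 0}" "P \<noteq> (\<lambda>_. 0)"
  shows "lead l \<rho> \<sigma> P \<noteq> (\<lambda>_. 0)"
proof -
  obtain ij where "P ij \<noteq> 0" "wt l \<rho> \<sigma> ij = vval l \<rho> \<sigma> P" using wt_max[OF assms] by blast
  then have "lead l \<rho> \<sigma> P ij \<noteq> 0" unfolding lead_def wt_def by (cases ij) simp
  then show ?thesis by metis
qed

lemma finite_mult: assumes fP: "finite {ij. P ij \<noteq> 0}" and fQ: "finite {ij. Q ij \<noteq> 0}"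
  shows "finite {ij. W_mult l P Q ij \<noteq> 0}"
proof -
  define N where "N = Max (snd ` {ij. P ij \<noteq> 0})"
  define g where "g = (\<lambda>((a::int,b::nat),(c::int,d::nat),m::nat). (a + c - int m * int l, b + d - m))"
  have "{ij. W_mult l P Q ij \<noteq> 0} \<subseteq> g ` ({ij. P ij \<noteq> 0} \<times> {ij. Q ij \<noteq> 0} \<times> {..N})"
  proof
    fix ij assume "ij \<in> {ij. W_mult l P Q ij \<noteq> 0}"
    moreover obtain i j where ij: "ij = (i,j)" by (cases ij)
    ultimately have "(\<Sum>x\<in>SS l P Q i j. FF l P Q x) \<noteq> 0" using Wm_unfold[of l P Q i j] by simp
    then have "SS l P Q i j \<noteq> {}" by (intro notI) simp
    then obtain x where "x \<in> SS l P Q i j" by blast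
    then obtain a b c d m where x: "x = ((a,b),(c,d),m)" and 
      h: "P (a,b) \<noteq> 0" "Q (c,d) \<noteq> 0" "m \<le> b" "a + c - int m * int l = i" "b + d = j + m"
      unfolding SS_def by auto
    have "(a,b) \<in> {ij. P ij \<noteq> 0}" using h(1) by simp
    then have "b \<in> snd ` {ij. P ij \<noteq> 0}" using imageI[of "(a,b)" _ snd] by simp
    then have "b \<le> N" unfolding N_def using fP by (intro Max_ge) auto
    then have mem: "((a,b),(c,d),m) \<in> {ij. P ij \<noteq> 0} \<times> {ij. Q ij \<noteq> 0} \<times> {..N}" using h by auto
    have geq: "ij = g ((a,b),(c,d),m)" unfolding g_def using h ij by auto
    show "ij \<in> g ` ({ij. P ij \<noteq> 0} \<times> {ij. Q ij \<noteq> 0} \<times> {..N})" by (rule image_eqI[where f=g and x="((a,b),(c,d),m)", OF geq mem])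
  qed
  moreover have "finite ({ij. P ij \<noteq> 0} \<times> {ij. Q ij \<noteq> 0} \<times> {..N})" using fP fQ by auto
  ultimately show ?thesis using finite_subset finite_imageI by blast
qed

lemma finite_comm: assumes fP: "finite {ij. P ij \<noteq> 0}" and fQ: "finite {ij. Q ij \<noteq> 0}"
  shows "finite {ij. W_comm l P Q ij \<noteq> 0}"
proof -
  have "{ij. W_comm l P Q ij \<noteq> 0} \<subseteq> {ij. W_mult l P Q ij \<noteq> 0} \<union> {ij. W_mult l Q P ij \<noteq> 0}"
    unfolding W_comm_def by auto
  then show ?thesis using finite_mult[OF fP fQ] finite_mult[OF fQ fP] by (meson finite_UnI finite_subset)
qed

lemma wt_add:
  assumes "((a,b),(c,d),m) \<in> SS l A B i j" "l > 0"
  shows "wt l \<rho> \<sigma> (i,j) = wt l \<rho> \<sigma> (a,b) + wt l \<rho> \<sigma> (c,d) - of_nat m * of_int (\<rho>+\<sigma>)"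
proof -
  have h: "a + c - int m * int l = i" "b + d = j + m" using assms(1) unfolding SS_def by auto
  have E0: "(of_int i :: rat) = of_int a + of_int c - of_nat m * of_nat l" using h(1) by (metis of_int_diff of_int_add of_int_mult of_int_of_nat_eq)
  have E1: "(of_nat j :: rat) = of_nat b + of_nat d - of_nat m" using h(2)
    by (metis add_diff_cancel_right' of_nat_add)
  have E2: "(of_int i :: rat) / of_nat l = of_int a / of_nat l + of_int c / of_nat l - of_nat m"
    using assms(2) E0 by (simp add: field_simps)
  have "wt l \<rho> \<sigma> (i,j) = of_int \<rho> * (of_int a / of_nat l + of_int c / of_nat l - of_nat m)
     + of_int \<sigma> * (of_nat b + of_nat d - of_nat m)" unfolding wt_def prod.case E1 E2 by (rule refl)
  then show ?thesis unfolding wt_def by (simp add: algebra_simps)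
qed

lemma key:
  fixes P Q :: "'a::field_char_0 wel"
  assumes l: "l > 0" and rs: "\<rho> + \<sigma> > 0"
    and fP: "finite {ij. P ij \<noteq> 0}" and fQ: "finite {ij. Q ij \<noteq> 0}"
    and p1: "P (i1,j1) \<noteq> 0" "wt l \<rho> \<sigma> (i1,j1) = vval l \<rho> \<sigma> P"
    and q1: "Q (i2,j2) \<noteq> 0" "wt l \<rho> \<sigma> (i2,j2) = vval l \<rho> \<sigma> Q"
    and uniq: "\<And>a b c d. P (a,b) \<noteq> 0 \<Longrightarrow> wt l \<rho> \<sigma> (a,b) = vval l \<rho> \<sigma> P \<Longrightarrow>
       Q (c,d) \<noteq> 0 \<Longrightarrow> wt l \<rho> \<sigma> (c,d) = vval l \<rho> \<sigma> Q \<Longrightarrow> b + d = j1 + j2 \<Longrightarrow>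
       (a,b) = (i1,j1) \<and> (c,d) = (i2,j2)"
    and j: "1 \<le> j1 + j2"
    and br: "bracket_rs l \<rho> \<sigma> P Q = (\<lambda>_. 0)"
  shows "i1 * int j2 = int j1 * i2"
proof (rule ccontr)
  assume ne: "i1 * int j2 \<noteq> int j1 * i2"
  define i where "i = i1 + i2 - int l"
  define j where "j = j1 + j2 - 1"
  have ij: "i = i1+i2 - int l" "j + 1 = j1 + j2" using j unfolding i_def j_def by auto
  let ?v = "vval l \<rho> \<sigma> P + vval l \<rho> \<sigma> Q - of_int (\<rho>+\<sigma>)"
  have rsq: "(of_int (\<rho>+\<sigma>) :: rat) > 0" using rs by simp
  have x1: "((i1,j1),(i2,j2),1) \<in> SS l P Q i j" if "j1 \<ge> 1"
    using ij p1 q1 that unfolding SS_def by auto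
  have x2: "((i2,j2),(i1,j1),1) \<in> SS l Q P i j" if "j2 \<ge> 1"
    using ij p1 q1 that unfolding SS_def by auto
  have wtij: "wt l \<rho> \<sigma> (i,j) = ?v"
  proof (cases "j1 \<ge> 1")
    case True
    show ?thesis using wt_add[OF x1[OF True] l, of \<rho> \<sigma>] p1 q1 by simp
  next
    case False
    then have j2: "j2 \<ge> 1" using j by simp
    show ?thesis using wt_add[OF x2[OF j2] l, of \<rho> \<sigma>] p1 q1 by simp
  qed
  have gen: "m \<le> 1 \<and> (m = 1 \<longrightarrow> wt l \<rho> \<sigma> (a,b) = vval l \<rho> \<sigma> A \<and> wt l \<rho> \<sigma> (c,d) = vval l \<rho> \<sigma> B \<and> b + d = j1 + j2)"
    if x: "((a,b),(c,d),m) \<in> SS l A B i j" and fA: "finite {ij. A ij \<noteq> 0}" and fB: "finite {ij. B ij \<noteq> 0}"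
      and vs: "vval l \<rho> \<sigma> A + vval l \<rho> \<sigma> B = vval l \<rho> \<sigma> P + vval l \<rho> \<sigma> Q"
    for a b c d m and A B :: "'a wel"
  proof -
    have e: "wt l \<rho> \<sigma> (i,j) = wt l \<rho> \<sigma> (a,b) + wt l \<rho> \<sigma> (c,d) - of_nat m * of_int (\<rho>+\<sigma>)"
      by (rule wt_add[OF x l])
    have nz: "A (a,b) \<noteq> 0" "B (c,d) \<noteq> 0" "b + d = j + m" using x unfolding SS_def by auto
    have le1: "wt l \<rho> \<sigma> (a,b) \<le> vval l \<rho> \<sigma> A" by (rule wt_le[OF fA nz(1)])
    have le2: "wt l \<rho> \<sigma> (c,d) \<le> vval l \<rho> \<sigma> B" by (rule wt_le[OF fB nz(2)])
    have "of_nat m * of_int (\<rho>+\<sigma>) \<le> (1::rat) * of_int (\<rho>+\<sigma>)" using e wtij le1 le2 vs by simp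
    then have "(of_nat m :: rat) \<le> 1" using rsq by (simp only: mult_le_cancel_right)
    then have m1: "m \<le> 1" by simp
    have "wt l \<rho> \<sigma> (a,b) = vval l \<rho> \<sigma> A \<and> wt l \<rho> \<sigma> (c,d) = vval l \<rho> \<sigma> B \<and> b + d = j1 + j2" if "m = 1"
      using e wtij le1 le2 vs that nz(3) ij(2) by auto
    then show ?thesis using m1 by blast
  qed
  have C: "W_comm l P Q (i,j) = P(i1,j1)*Q(i2,j2)*(of_nat j1 * (of_int i2/of_nat l) - of_nat j2 * (of_int i1/of_nat l))"
  proof (rule comm_coeff[OF fP fQ _ _ _ _ p1(1) q1(1) ij])
    show "m \<le> 1" if "((a,b),(c,d),m) \<in> SS l P Q i j" for a b c d m using gen[OF that fP fQ] by simp
    show "m \<le> 1" if "((a,b),(c,d),m) \<in> SS l Q P i j" for a b c d m using gen[OF that fQ fP] by simp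
    show "(a,b) = (i1,j1) \<and> (c,d) = (i2,j2)" if "((a,b),(c,d),1) \<in> SS l P Q i j" for a b c d
    proof -
      have "P (a,b) \<noteq> 0" "Q (c,d) \<noteq> 0" using that unfolding SS_def by auto
      then show ?thesis using gen[OF that fP fQ] uniq by auto
    qed
    show "(a,b) = (i2,j2) \<and> (c,d) = (i1,j1)" if "((a,b),(c,d),1) \<in> SS l Q P i j" for a b c d
    proof -
      have "Q (a,b) \<noteq> 0" "P (c,d) \<noteq> 0" using that unfolding SS_def by auto
      moreover have "wt l \<rho> \<sigma> (a,b) = vval l \<rho> \<sigma> Q \<and> wt l \<rho> \<sigma> (c,d) = vval l \<rho> \<sigma> P \<and> b + d = j1 + j2"
        using gen[OF that fQ fP] by simp
      ultimately show ?thesis using uniq[of c d a b] by auto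
    qed
  qed
  have "(of_nat j1 * (of_int i2/of_nat l) - of_nat j2 * (of_int i1/of_nat l) :: 'a)
        = of_int (int j1 * i2 - i1 * int j2) / of_nat l"
    by (simp add: diff_divide_distrib algebra_simps)
  moreover have "(of_int (int j1 * i2 - i1 * int j2) :: 'a) \<noteq> 0" using ne by (metis eq_iff_diff_eq_0 mult.commute of_int_eq_0_iff)
  ultimately have Cnz: "W_comm l P Q (i,j) \<noteq> 0" using C p1(1) q1(1) l by simp
  have fC: "finite {ij. W_comm l P Q ij \<noteq> 0}" by (rule finite_comm[OF fP fQ])
  have C0: "W_comm l P Q \<noteq> (\<lambda>_. 0)" using Cnz by metis
  have "?v \<le> vval l \<rho> \<sigma> (W_comm l P Q)" using wt_le[OF fC Cnz, of l \<rho> \<sigma>] wtij by simp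
  then have "lead l \<rho> \<sigma> (W_comm l P Q) = (\<lambda>_. 0)" using br C0 unfolding bracket_rs_def Let_def
    by (auto split: if_splits)
  with lead_nz[OF fC C0] show False by simp
qed

lemma line_set:
  fixes l :: nat and \<rho> \<sigma> :: int and P :: "'a::zero wel"
  assumes "finite {ij. P ij \<noteq> 0}" "P \<noteq> (\<lambda>_. 0)"
  defines "L \<equiv> {ij. P ij \<noteq> 0 \<and> wt l \<rho> \<sigma> ij = vval l \<rho> \<sigma> P}"
  shows "finite L" "L \<noteq> {}"
    "Supp l (lead l \<rho> \<sigma> P) = (\<lambda>(i,j). (of_int i / of_nat l, of_nat j)) ` L"
proof -
  show "finite L" unfolding L_def using assms(1) by (rule rev_finite_subset) auto
  show "L \<noteq> {}" unfolding L_def using wt_max[OF assms(1,2)] by auto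
  show "Supp l (lead l \<rho> \<sigma> P) = (\<lambda>(i,j). (of_int i / of_nat l, of_nat j)) ` L"
    unfolding Supp_def lead_def L_def wt_def by (auto split: if_splits)
qed

lemma st_char:
  assumes l: "l > 0" and r: "\<rho> > 0" and rs: "\<rho> + \<sigma> > 0"
    and fP: "finite {ij. P ij \<noteq> 0}" and nz: "P \<noteq> (\<lambda>_. 0)"
  shows "\<exists>i1 j1. P (i1,j1) \<noteq> 0 \<and> wt l \<rho> \<sigma> (i1,j1) = vval l \<rho> \<sigma> P \<and>
     (\<forall>a b. P (a,b) \<noteq> 0 \<longrightarrow> wt l \<rho> \<sigma> (a,b) = vval l \<rho> \<sigma> P \<longrightarrow> j1 \<le> b) \<and>
     st l \<rho> \<sigma> P = (of_int i1 / of_nat l, of_nat j1)"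
proof -
  define L where "L = {ij. P ij \<noteq> 0 \<and> wt l \<rho> \<sigma> ij = vval l \<rho> \<sigma> P}"
  note Lp = line_set[OF fP nz, of l \<rho> \<sigma>, folded L_def]
  define j1 where "j1 = Min (snd ` L)"
  have "j1 \<in> snd ` L" unfolding j1_def using Lp by (intro Min_in) auto
  then obtain i1 where i1: "(i1,j1) \<in> L" by force
  have minj: "j1 \<le> b" if "(a,b) \<in> L" for a b unfolding j1_def using Lp that by (intro Min_le) force+
  define S where "S = Supp l (lead l \<rho> \<sigma> P)"
  define a1 where "a1 = (of_int i1 / of_nat l :: rat)"
  define b1 where "b1 = (of_nat j1 :: rat)"
  have finS: "finite S" unfolding S_def Lp(3) using Lp(1) by simp
  have S1: "(a1,b1) \<in> S" unfolding S_def Lp(3) a1_def b1_def using i1 by force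
  have ineq: "a - b \<le> a1 - b1 \<and> (a - b = a1 - b1 \<longrightarrow> a = a1 \<and> b = b1)" if "(a,b) \<in> S" for a b
  proof -
    from that obtain i j where ij: "(i,j) \<in> L" "a = of_int i / of_nat l" "b = of_nat j"
      unfolding S_def Lp(3) by auto
    have "wt l \<rho> \<sigma> (i,j) = wt l \<rho> \<sigma> (i1,j1)" using ij(1) i1 unfolding L_def by simp
    then have e: "of_int \<rho> * a + of_int \<sigma> * b = of_int \<rho> * a1 + of_int \<sigma> * b1"
      unfolding wt_def a1_def b1_def ij by simp
    have "b1 \<le> b" unfolding b1_def ij using minj[OF ij(1)] by simp
    then show ?thesis using line_ineq[OF _ _ e] r rs by simp
  qed
  have M: "Max ((\<lambda>(a,b). a - b) ` S) = a1 - b1"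
    by (rule Max_eqI) (use finS S1 ineq in auto)
  have T: "{(a,b) \<in> S. a - b = a1 - b1} = {(a1,b1)}" using S1 ineq by auto
  have st: "st l \<rho> \<sigma> P = (a1,b1)"
    unfolding st_def Let_def S_def[symmetric] M T by (simp, rule the_equality, auto)
  show ?thesis
    apply (rule exI[of _ i1], rule exI[of _ j1])
    using i1 minj st unfolding L_def a1_def b1_def by auto
qed

lemma en_char:
  assumes l: "l > 0" and r: "\<rho> > 0" and rs: "\<rho> + \<sigma> > 0"
    and fP: "finite {ij. P ij \<noteq> 0}" and nz: "P \<noteq> (\<lambda>_. 0)"
  shows "\<exists>i1 j1. P (i1,j1) \<noteq> 0 \<and> wt l \<rho> \<sigma> (i1,j1) = vval l \<rho> \<sigma> P \<and>
     (\<forall>a b. P (a,b) \<noteq> 0 \<longrightarrow> wt l \<rho> \<sigma> (a,b) = vval l \<rho> \<sigma> P \<longrightarrow> b \<le> j1) \<and>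
     en l \<rho> \<sigma> P = (of_int i1 / of_nat l, of_nat j1)"
proof -
  define L where "L = {ij. P ij \<noteq> 0 \<and> wt l \<rho> \<sigma> ij = vval l \<rho> \<sigma> P}"
  note Lp = line_set[OF fP nz, of l \<rho> \<sigma>, folded L_def]
  define j1 where "j1 = Max (snd ` L)"
  have "j1 \<in> snd ` L" unfolding j1_def using Lp by (intro Max_in) auto
  then obtain i1 where i1: "(i1,j1) \<in> L" by force
  have maxj: "b \<le> j1" if "(a,b) \<in> L" for a b unfolding j1_def using Lp that by (intro Max_ge) force+
  define S where "S = Supp l (lead l \<rho> \<sigma> P)"
  define a1 where "a1 = (of_int i1 / of_nat l :: rat)"
  define b1 where "b1 = (of_nat j1 :: rat)"
  have finS: "finite S" unfolding S_def Lp(3) using Lp(1) by simp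
  have S1: "(a1,b1) \<in> S" unfolding S_def Lp(3) a1_def b1_def using i1 by force
  have ineq: "b - a \<le> b1 - a1 \<and> (b - a = b1 - a1 \<longrightarrow> a = a1 \<and> b = b1)" if "(a,b) \<in> S" for a b
  proof -
    from that obtain i j where ij: "(i,j) \<in> L" "a = of_int i / of_nat l" "b = of_nat j"
      unfolding S_def Lp(3) by auto
    have "wt l \<rho> \<sigma> (i,j) = wt l \<rho> \<sigma> (i1,j1)" using ij(1) i1 unfolding L_def by simp
    then have e: "of_int \<rho> * a + of_int \<sigma> * b = of_int \<rho> * a1 + of_int \<sigma> * b1"
      unfolding wt_def a1_def b1_def ij by simp
    have "b \<le> b1" unfolding b1_def ij using maxj[OF ij(1)] by simp
    then show ?thesis using line_ineq2[OF _ _ e] r rs by simp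
  qed
  have M: "Max ((\<lambda>(a,b). b - a) ` S) = b1 - a1"
    by (rule Max_eqI) (use finS S1 ineq in auto)
  have T: "{(a,b) \<in> S. b - a = b1 - a1} = {(a1,b1)}" using S1 ineq by auto
  have en: "en l \<rho> \<sigma> P = (a1,b1)"
    unfolding en_def Let_def S_def[symmetric] M T by (simp, rule the_equality, auto)
  show ?thesis
    apply (rule exI[of _ i1], rule exI[of _ j1])
    using i1 maxj en unfolding L_def a1_def b1_def by auto
qed

lemma wt_inj: assumes "wt l \<rho> \<sigma> (a,b) = wt l \<rho> \<sigma> (c,b)" "\<rho> > 0" "l > 0"
  shows "a = c"
proof -
  have "of_int \<rho> * (of_int a / of_nat l) = of_int \<rho> * (of_int c / (of_nat l :: rat))"
    using assms(1) unfolding wt_def by simp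
  then have "(of_int a :: rat) = of_int c" using assms(2,3) by simp
  then show ?thesis by simp
qed

lemma aligned_of: assumes "i1 * int j2 = int j1 * i2"
  shows "aligned (of_int i1 / of_nat l, of_nat j1) (of_int i2 / of_nat l, of_nat j2)"
proof -
  have "(of_int i1 :: rat) * of_nat j2 = of_nat j1 * of_int i2"
    using assms by (metis of_int_mult of_int_of_nat_eq)
  then show ?thesis unfolding aligned_def by (simp add: field_simps)
qed

theorem corollary2p7:
  fixes P Q :: "'a::field_char_0 wel" and l :: nat and \<rho> \<sigma> :: int
  assumes "l > 0"
    and "(\<rho>, \<sigma>) \<in> frakV" and "\<sigma> \<le> 0"
    and "in_W P" and "in_W Q" and "P \<noteq> (\<lambda>_. 0)" and "Q \<noteq> (\<lambda>_. 0)"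
    and "bracket_rs l \<rho> \<sigma> P Q = (\<lambda>_. 0)"
  shows "aligned (st l \<rho> \<sigma> P) (st l \<rho> \<sigma> Q) \<and> aligned (en l \<rho> \<sigma> P) (en l \<rho> \<sigma> Q)"
proof -
  have l: "l > 0" and rs: "\<rho> + \<sigma> > 0" using assms(1,2) unfolding frakV_def by auto
  have r: "\<rho> > 0" using rs assms(3) by simp
  have fP: "finite {ij. P ij \<noteq> 0}" and fQ: "finite {ij. Q ij \<noteq> 0}" using assms(4,5) unfolding in_W_def by auto
  have A1: "aligned (st l \<rho> \<sigma> P) (st l \<rho> \<sigma> Q)"
  proof -
    obtain i1 j1 where p: "P (i1,j1) \<noteq> 0" "wt l \<rho> \<sigma> (i1,j1) = vval l \<rho> \<sigma> P"
      "\<And>a b. P (a,b) \<noteq> 0 \<Longrightarrow> wt l \<rho> \<sigma> (a,b) = vval l \<rho> \<sigma> P \<Longrightarrow> j1 \<le> b"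
      "st l \<rho> \<sigma> P = (of_int i1 / of_nat l, of_nat j1)"
      using st_char[OF l r rs fP assms(6)] by blast
    obtain i2 j2 where q: "Q (i2,j2) \<noteq> 0" "wt l \<rho> \<sigma> (i2,j2) = vval l \<rho> \<sigma> Q"
      "\<And>a b. Q (a,b) \<noteq> 0 \<Longrightarrow> wt l \<rho> \<sigma> (a,b) = vval l \<rho> \<sigma> Q \<Longrightarrow> j2 \<le> b"
      "st l \<rho> \<sigma> Q = (of_int i2 / of_nat l, of_nat j2)"
      using st_char[OF l r rs fQ assms(7)] by blast
    have "i1 * int j2 = int j1 * i2"
    proof (cases "j1 + j2 = 0")
      case True then show ?thesis by simp
    next
      case False
      show ?thesis
      proof (rule key[OF l rs fP fQ p(1,2) q(1,2) _ _ assms(8)])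
        show "1 \<le> j1 + j2" using False by linarith
        fix a b c d assume h: "P (a,b) \<noteq> 0" "wt l \<rho> \<sigma> (a,b) = vval l \<rho> \<sigma> P"
          "Q (c,d) \<noteq> 0" "wt l \<rho> \<sigma> (c,d) = vval l \<rho> \<sigma> Q" "b + d = j1 + j2"
        have "j1 \<le> b" "j2 \<le> d" using p(3)[OF h(1,2)] q(3)[OF h(3,4)] .
        then have bd: "b = j1" "d = j2" using h(5) by auto
        have "a = i1" using wt_inj[of l \<rho> \<sigma> a j1 i1] h(2) p(2) bd r l by simp
        moreover have "c = i2" using wt_inj[of l \<rho> \<sigma> c j2 i2] h(4) q(2) bd r l by simp
        ultimately show "(a,b) = (i1,j1) \<and> (c,d) = (i2,j2)" using bd by simp
      qed
    qed
    then show ?thesis using p(4) q(4) aligned_of by simp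
  qed
  have A2: "aligned (en l \<rho> \<sigma> P) (en l \<rho> \<sigma> Q)"
  proof -
    obtain i1 j1 where p: "P (i1,j1) \<noteq> 0" "wt l \<rho> \<sigma> (i1,j1) = vval l \<rho> \<sigma> P"
      "\<And>a b. P (a,b) \<noteq> 0 \<Longrightarrow> wt l \<rho> \<sigma> (a,b) = vval l \<rho> \<sigma> P \<Longrightarrow> b \<le> j1"
      "en l \<rho> \<sigma> P = (of_int i1 / of_nat l, of_nat j1)"
      using en_char[OF l r rs fP assms(6)] by blast
    obtain i2 j2 where q: "Q (i2,j2) \<noteq> 0" "wt l \<rho> \<sigma> (i2,j2) = vval l \<rho> \<sigma> Q"
      "\<And>a b. Q (a,b) \<noteq> 0 \<Longrightarrow> wt l \<rho> \<sigma> (a,b) = vval l \<rho> \<sigma> Q \<Longrightarrow> b \<le> j2"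
      "en l \<rho> \<sigma> Q = (of_int i2 / of_nat l, of_nat j2)"
      using en_char[OF l r rs fQ assms(7)] by blast
    have "i1 * int j2 = int j1 * i2"
    proof (cases "j1 + j2 = 0")
      case True then show ?thesis by simp
    next
      case False
      show ?thesis
      proof (rule key[OF l rs fP fQ p(1,2) q(1,2) _ _ assms(8)])
        show "1 \<le> j1 + j2" using False by linarith
        fix a b c d assume h: "P (a,b) \<noteq> 0" "wt l \<rho> \<sigma> (a,b) = vval l \<rho> \<sigma> P"
          "Q (c,d) \<noteq> 0" "wt l \<rho> \<sigma> (c,d) = vval l \<rho> \<sigma> Q" "b + d = j1 + j2"
        have "b \<le> j1" "d \<le> j2" using p(3)[OF h(1,2)] q(3)[OF h(3,4)] .
        then have bd: "b = j1" "d = j2" using h(5) by auto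
        have "a = i1" using wt_inj[of l \<rho> \<sigma> a j1 i1] h(2) p(2) bd r l by simp
        moreover have "c = i2" using wt_inj[of l \<rho> \<sigma> c j2 i2] h(4) q(2) bd r l by simp
        ultimately show "(a,b) = (i1,j1) \<and> (c,d) = (i2,j2)" using bd by simp
      qed
    qed
    then show ?thesis using p(4) q(4) aligned_of by simp
  qed
  show ?thesis using A1 A2 by simp
qed

end
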